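(* Let $\mathcal U$ be a compact interval and consider the model described in the context with fixed $r$ and fixed $k_0\ge1$. Suppose conditions (C1), (C2), (C4') and (C6) of the context hold, with $\tau\in[0,1)$, fixed $L$, and sequences $c_1(p),c_2(p)$. Then for $k=1,\dots,k_0$, $$\max_{1\le j\le p}\sum_{i=1}^p\|\Sigma^{(k)}_{yy,ij}\|_{\mathcal S}^{\tau}\lesssim c_1(p)\quad\text{and}\quad\max_{1\le i\le p}\sum_{j=1}^p\|\Sigma^{(k)}_{yy,ij}\|_{\mathcal S}^{\tau}\lesssim c_1(p)+c_2(p),$$ where $\lesssim$ hides a constant not depending on $p$.
   Context: Notation: for $f\in L_2(\mathcal U)$, $\|f\|=(\int_{\mathcal U}f^2)^{1/2}$; for a bivariate function $K$ on $\mathcal U^2$, $\|K\|_{\mathcal S}=(\iint K(u,v)^2du\,dv)^{1/2}$. For $\tau=0$, $x^0$ is interpreted as $\mathbf 1\{x\neq0\}$ (so the sums count nonzero entries). Model: for each $t$, $\mathbf Y_t(\cdot)=(Y_{t1},\dots,Y_{tp})^{\top}$ is a $p$-vector of random functions in $L_2(\mathcal U)$ with $\mathbf Y_t(u)=\mathbf A\mathbf X_t(u)+\boldsymbol\varepsilon_t(u)$, where $\mathbf A=(A_{ij})\in\mathbb R^{p\times r}$ is deterministic of rank $r$, $\mathbf X_t=(X_{t1},\dots,X_{tr})^{\top}$ is an $r$-vector of latent random functions, and $\boldsymbol\varepsilon_t=(\varepsilon_{t1},\dots,\varepsilon_{tp})^{\top}$ satisfies $E\boldsymbol\varepsilon_t(u)=\mathbf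 0$ and $\mathrm{Cov}\{\boldsymbol\varepsilon_{t+k}(u),\boldsymbol\varepsilon_t(v)\}=\mathbf 0$ for $k\ne0$. Let $\boldsymbol\Sigma^{(k)}_{yy}(u,v)=\mathrm{Cov}\{\mathbf Y_{t+k}(u),\mathbf Y_t(v)\}=(\Sigma^{(k)}_{yy,ij}(u,v))_{p\times p}$, $\boldsymbol\Sigma^{(k)}_{xx}(u,v)=\mathrm{Cov}\{\mathbf X_{t+k}(u),\mathbf X_t(v)\}$, $\boldsymbol\Sigma^{(k)}_{x\varepsilon}(u,v)=\mathrm{Cov}\{\mathbf X_{t+k}(u),\boldsymbol\varepsilon_t(v)\}=(\Sigma^{(k)}_{x\varepsilon,lj}(u,v))_{r\times p}$, $\boldsymbol\Sigma^{(0)}_{\varepsilon\varepsilon}(u,v)=\mathrm{Cov}\{\boldsymbol\varepsilon_t(u),\boldsymbol\varepsilon_t(v)\}$, all not depending on $t$. Conditions. (C1) $\{\mathbf X_t\}$ is weakly stationary with $E\|X_{tj}\|^4=O(1)$, $j=1,\dots,r$; and for at least one $k\in\{1,\dots,k_0\}$ the matrix $\iint\boldsymbol\Sigma^{(k)}_{xx}(u,v)\boldsymbol\Sigma^{(k)}_{xx}(u,v)^{\top}du\,dv$ has rank $r$. (C2) $\{\boldsymbol\varepsilon_t\}$ is white noise with $\max_jE\|\varepsilon_{tj}\|^2=O(1)$, and $\inf_{v\in\mathcal U}\lambda_{\min}\{\boldsymbol\Sigma^{(0)}_{\varepsilon\varepsilon}(v,v)\}$ is bounded away from zero. (C4') For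 $k=1,\dots,k_0$, $\max_{1\le l\le r}\sum_{j=1}^p\|\Sigma^{(k)}_{x\varepsilon,lj}\|_{\mathcal S}^{\tau}\le c_2(p)$; and $\mathrm{Cov}\{\mathbf X_t(u),\boldsymbol\varepsilon_{t+k}(v)\}=\mathbf 0$ for every integer $k\ge0$ and $u,v\in\mathcal U$. (C6) (column sparsity) $\max_{1\le j\le r}\sum_{i=1}^p|A_{ij}|^{\tau}\le c_1(p)$ and $\max_{i,j}|A_{ij}|\le L$, with $\tau\in[0,1)$. *)

theory Defs
  imports "HOL-Probability.Probability"
begin

definition L2norm :: "real \<Rightarrow> real \<Rightarrow> (real \<Rightarrow> real) \<Rightarrow> real" where
  "L2norm a b f = sqrt (LINT u:{a..b}|lborel. (f u)^2)"

definition HSnorm :: "real \<Rightarrow> real \<Rightarrow> (real \<Rightarrow> real \<Rightarrow> real) \<Rightarrow> real" where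
  "HSnorm a b K = sqrt (LINT u:{a..b}|lborel. (LINT v:{a..b}|lborel. (K u v)^2))"

definition covar :: "'w measure \<Rightarrow> ('w \<Rightarrow> real) \<Rightarrow> ('w \<Rightarrow> real) \<Rightarrow> real" where
  "covar M f g = (\<integral>w. f w * g w \<partial>M) - (\<integral>w. f w \<partial>M) * (\<integral>w. g w \<partial>M)"

text \<open>x^tau with the convention x^0 = indicator of x \<noteq> 0 (applied to x \<ge> 0).\<close>
definition tpow :: "real \<Rightarrow> real \<Rightarrow> real" where
  "tpow \<tau> x = (if \<tau> = 0 then (if x = 0 then 0 else 1) else x powr \<tau>)"

text \<open>The observed series Y_t(u) = A X_t(u) + eps_t(u), rows indexed by i (i < p),
  latent components indexed by the finite type 'r (r = CARD('r)).\<close>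
definition Ymodel :: "(nat \<Rightarrow> 'r::finite \<Rightarrow> real) \<Rightarrow> (int \<Rightarrow> 'r \<Rightarrow> real \<Rightarrow> 'w \<Rightarrow> real)
    \<Rightarrow> (int \<Rightarrow> nat \<Rightarrow> real \<Rightarrow> 'w \<Rightarrow> real) \<Rightarrow> int \<Rightarrow> nat \<Rightarrow> real \<Rightarrow> 'w \<Rightarrow> real" where
  "Ymodel A X e t i u w = (\<Sum>l\<in>UNIV. A i l * X t l u w) + e t i u w"

text \<open>Lag-k autocovariance kernel of Y (entry (i,j)); by the standing assumptions it does
  not depend on t, so it is computed at t = 0.\<close>
definition Sigma_yy :: "'w measure \<Rightarrow> (nat \<Rightarrow> 'r::finite \<Rightarrow> real) \<Rightarrow> (int \<Rightarrow> 'r \<Rightarrow> real \<Rightarrow> 'w \<Rightarrow> real)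
    \<Rightarrow> (int \<Rightarrow> nat \<Rightarrow> real \<Rightarrow> 'w \<Rightarrow> real) \<Rightarrow> nat \<Rightarrow> nat \<Rightarrow> nat \<Rightarrow> real \<Rightarrow> real \<Rightarrow> real" where
  "Sigma_yy M A X e k i j u v = covar M (Ymodel A X e (int k) i u) (Ymodel A X e 0 j v)"

definition is_eigenvalue :: "nat \<Rightarrow> (nat \<Rightarrow> nat \<Rightarrow> real) \<Rightarrow> real \<Rightarrow> bool" where
  "is_eigenvalue p S mu \<longleftrightarrow> (\<exists>x::nat \<Rightarrow> real. (\<exists>i<p. x i \<noteq> 0) \<and>
      (\<forall>i<p. (\<Sum>j<p. S i j * x j) = mu * x i))"

end

theory Submission
  imports Defs
begin
definition L2 :: "'w measure \<Rightarrow> ('w \<Rightarrow> real) \<Rightarrow> bool" where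
  "L2 M f \<longleftrightarrow> f \<in> borel_measurable M \<and> integrable M (\<lambda>w. (f w)^2)"

lemma abs_mult_le_sq: "\<bar>x*y\<bar> \<le> x^2 + (y::real)^2"
proof -
  have "0 \<le> (\<bar>x\<bar> - \<bar>y\<bar>)^2" by simp
  then have "2*\<bar>x\<bar>*\<bar>y\<bar> \<le> x^2 + y^2" by (simp add: power2_eq_square algebra_simps)
  moreover have "\<bar>x\<bar>*\<bar>y\<bar> \<ge> 0" by simp
  ultimately show ?thesis unfolding abs_mult by linarith
qed

lemma L2_mult:
  assumes "L2 M f" "L2 M g" shows "integrable M (\<lambda>w. f w * g w)"
proof (rule Bochner_Integration.integrable_bound[where f="\<lambda>w. (f w)^2 + (g w)^2"])
  show "integrable M (\<lambda>w. (f w)^2 + (g w)^2)" using assms by (auto simp: L2_def)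
  show "(\<lambda>w. f w * g w) \<in> borel_measurable M" using assms by (auto simp: L2_def)
  have "\<And>x y::real. \<bar>x*y\<bar> \<le> x^2 + y^2"
    by (rule abs_mult_le_sq)
  then show "AE x in M. norm (f x * g x) \<le> norm ((f x)^2 + (g x)^2)" by auto
qed

lemma L2_int:
  assumes "finite_measure M" "L2 M f" shows "integrable M f"
proof (rule Bochner_Integration.integrable_bound[where f="\<lambda>w. 1 + (f w)^2"])
  interpret finite_measure M by fact
  show "integrable M (\<lambda>w. 1 + (f w)^2)" using assms by (auto simp: L2_def)
  show "f \<in> borel_measurable M" using assms by (auto simp: L2_def)
  have "\<And>x::real. \<bar>x\<bar> \<le> 1 + x^2"
  proof -
    fix x :: real
    have "\<bar>x*1\<bar> \<le> x^2 + 1^2" by (rule abs_mult_le_sq)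
    then show "\<bar>x\<bar> \<le> 1 + x^2" by simp
  qed
  then show "AE x in M. norm (f x) \<le> norm (1 + (f x)^2)" by auto
qed

lemma L2_add:
  assumes "L2 M f" "L2 M g" shows "L2 M (\<lambda>w. f w + g w)"
proof -
  have "integrable M (\<lambda>w. (f w)^2 + (g w)^2 + 2 * (f w * g w))"
    using assms L2_mult[OF assms] by (auto simp: L2_def)
  then show ?thesis using assms unfolding L2_def by (auto simp: power2_sum algebra_simps)
qed

lemma L2_cmult:
  assumes "L2 M f" shows "L2 M (\<lambda>w. c * f w)"
  using assms unfolding L2_def by (auto simp: power_mult_distrib)

lemma L2_zero: "L2 M (\<lambda>w. 0)" by (simp add: L2_def)

lemma L2_sum:
  assumes "\<And>s. s \<in> S \<Longrightarrow> L2 M (f s)" shows "L2 M (\<lambda>w. \<Sum>s\<in>S. f s w)"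
  using assms
proof (induction S rule: infinite_finite_induct)
  case (infinite A) then show ?case by (simp add: L2_zero)
next
  case empty then show ?case by (simp add: L2_zero)
next
  case (insert x F)
  then show ?case by (simp add: L2_add)
qed

lemma covar_sym: "covar M f g = covar M g f"
  unfolding covar_def by (simp only: mult.commute)

lemma covar_add_left:
  assumes "finite_measure M" "L2 M f" "L2 M h" "L2 M g"
  shows "covar M (\<lambda>w. f w + h w) g = covar M f g + covar M h g"
proof -
  have i: "integrable M f" "integrable M h" using assms L2_int by auto
  have j: "integrable M (\<lambda>w. f w * g w)" "integrable M (\<lambda>w. h w * g w)" using assms L2_mult by auto
  have "(\<integral>w. (f w + h w) * g w \<partial>M) = (\<integral>w. f w * g w \<partial>M) + (\<integral>w. h w * g w \<partial>M)"
    using j by (simp add: distrib_right)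
  moreover have "(\<integral>w. f w + h w \<partial>M) = (\<integral>w. f w \<partial>M) + (\<integral>w. h w \<partial>M)" using i by simp
  ultimately show ?thesis unfolding covar_def by (simp add: algebra_simps)
qed

lemma covar_cmult_left: "covar M (\<lambda>w. c * f w) g = c * covar M f g"
  unfolding covar_def by (simp add: mult.assoc right_diff_distrib)

lemma covar_zero_left: "covar M (\<lambda>w. 0) g = 0"
  unfolding covar_def by simp

lemma covar_sum_left:
  assumes "finite_measure M" "\<And>s. s \<in> S \<Longrightarrow> L2 M (f s)" "L2 M g"
  shows "covar M (\<lambda>w. \<Sum>s\<in>S. f s w) g = (\<Sum>s\<in>S. covar M (f s) g)"
  using assms(2)
proof (induction S rule: infinite_finite_induct)
  case (infinite A) then show ?case by (simp add: covar_zero_left)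
next
  case empty then show ?case by (simp add: covar_zero_left)
next
  case (insert x F)
  have "L2 M (\<lambda>w. \<Sum>s\<in>F. f s w)" using insert by (intro L2_sum) auto
  then show ?case using covar_add_left[OF assms(1), where f="f x" and h="\<lambda>w. \<Sum>s\<in>F. f s w" and g=g] insert assms(3) by simp
qed

lemma quad_disc:
  fixes A B C :: real
  assumes "\<And>t. 0 \<le> t^2 * A - 2 * t * C + B" "0 \<le> A"
  shows "C^2 \<le> A * B"
proof -
  have B: "0 \<le> B" using assms(1)[of 0] by simp
  show ?thesis
  proof (cases "A = 0")
    case True
    have "C = 0"
    proof (rule ccontr)
      assume "C \<noteq> 0"
      have "(B+1)/(2*C) * C = (B+1)/2" using \<open>C \<noteq> 0\<close> by simp
      then show False using assms(1)[of "(B+1)/(2*C)"] True \<open>C \<noteq> 0\<close> by simp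
    qed
    then show ?thesis using True by simp
  next
    case False
    have "0 \<le> (C/A)^2 * A - 2 * (C/A) * C + B" by (rule assms(1))
    also have "\<dots> = B - C^2 / A" using False by (simp add: power2_eq_square divide_simps)
    finally have h: "C^2 / A \<le> B" by simp
    have "0 \<le> A" by (rule assms(2))
    then have "0 < A" using False by simp
    then show ?thesis using h by (simp add: pos_divide_le_eq mult.commute)
  qed
qed

lemma L2_CS:
  assumes "L2 M f" "L2 M g"
  shows "(\<integral>w. f w * g w \<partial>M)^2 \<le> (\<integral>w. (f w)^2 \<partial>M) * (\<integral>w. (g w)^2 \<partial>M)"
proof (rule quad_disc)
  have i: "integrable M (\<lambda>w. (f w)^2)" "integrable M (\<lambda>w. (g w)^2)" "integrable M (\<lambda>w. f w * g w)"
    using assms L2_mult by (auto simp: L2_def)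
  show "0 \<le> (\<integral>w. (f w)^2 \<partial>M)" by simp
  fix t :: real
  have "0 \<le> (\<integral>w. (t * f w - g w)^2 \<partial>M)" by simp
  also have "(\<integral>w. (t * f w - g w)^2 \<partial>M) = (\<integral>w. t^2 * (f w)^2 - 2 * t * (f w * g w) + (g w)^2 \<partial>M)"
    by (intro Bochner_Integration.integral_cong) (auto simp: power2_eq_square algebra_simps)
  also have "\<dots> = t^2 * (\<integral>w. (f w)^2 \<partial>M) - 2 * t * (\<integral>w. f w * g w \<partial>M) + (\<integral>w. (g w)^2 \<partial>M)"
    using i by simp
  finally show "0 \<le> t^2 * (\<integral>w. (f w)^2 \<partial>M) - 2 * t * (\<integral>w. f w * g w \<partial>M) + (\<integral>w. (g w)^2 \<partial>M)" .
qed

lemma L2_const: "finite_measure M \<Longrightarrow> L2 M (\<lambda>w. c)"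
  by (simp add: L2_def finite_measure.integrable_const)

lemma covar_CS:
  assumes P: "prob_space M" and f: "L2 M f" and g: "L2 M g"
  shows "(covar M f g)^2 \<le> (\<integral>w. (f w)^2 \<partial>M) * (\<integral>w. (g w)^2 \<partial>M)"
proof -
  interpret prob_space M by fact
  have fm: "finite_measure M" by unfold_locales
  define c1 where "c1 = (\<integral>w. f w \<partial>M)"
  define c2 where "c2 = (\<integral>w. g w \<partial>M)"
  have f': "L2 M (\<lambda>w. f w + (- c1))" by (intro L2_add f L2_const fm)
  have g': "L2 M (\<lambda>w. g w + (- c2))" by (intro L2_add g L2_const fm)
  have if_: "integrable M f" "integrable M g" using L2_int[OF fm f] L2_int[OF fm g] by auto
  have ifg: "integrable M (\<lambda>w. f w * g w)" using L2_mult f g by auto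
  have iff: "integrable M (\<lambda>w. (f w)^2)" "integrable M (\<lambda>w. (g w)^2)" using f g by (auto simp: L2_def)
  have e1: "(\<integral>w. (f w + (- c1)) * (g w + (- c2)) \<partial>M) = covar M f g"
  proof -
    have "(\<integral>w. (f w + (- c1)) * (g w + (- c2)) \<partial>M) = (\<integral>w. f w * g w - c2 * f w - c1 * g w + c1 * c2 \<partial>M)"
      by (intro Bochner_Integration.integral_cong) (auto simp: algebra_simps)
    also have "\<dots> = (\<integral>w. f w * g w \<partial>M) - c2 * c1 - c1 * c2 + c1 * c2"
      using if_ ifg by (simp add: c1_def c2_def prob_space)
    finally show ?thesis unfolding covar_def c1_def c2_def by simp
  qed
  have e2: "(\<integral>w. (f w + (- c1))^2 \<partial>M) \<le> (\<integral>w. (f w)^2 \<partial>M)"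
  proof -
    have "(\<integral>w. (f w + (- c1))^2 \<partial>M) = (\<integral>w. (f w)^2 - 2 * c1 * f w + c1^2 \<partial>M)"
      by (intro Bochner_Integration.integral_cong) (auto simp: power2_eq_square algebra_simps)
    also have "\<dots> = (\<integral>w. (f w)^2 \<partial>M) - 2 * c1 * c1 + c1^2"
      using if_ iff by (simp add: c1_def prob_space)
    finally show ?thesis by (simp add: power2_eq_square)
  qed
  have e3: "(\<integral>w. (g w + (- c2))^2 \<partial>M) \<le> (\<integral>w. (g w)^2 \<partial>M)"
  proof -
    have "(\<integral>w. (g w + (- c2))^2 \<partial>M) = (\<integral>w. (g w)^2 - 2 * c2 * g w + c2^2 \<partial>M)"
      by (intro Bochner_Integration.integral_cong) (auto simp: power2_eq_square algebra_simps)
    also have "\<dots> = (\<integral>w. (g w)^2 \<partial>M) - 2 * c2 * c2 + c2^2"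
      using if_ iff by (simp add: c2_def prob_space)
    finally show ?thesis by (simp add: power2_eq_square)
  qed
  have "(covar M f g)^2 \<le> (\<integral>w. (f w + (- c1))^2 \<partial>M) * (\<integral>w. (g w + (- c2))^2 \<partial>M)"
    using L2_CS[OF f' g'] e1 by simp
  also have "\<dots> \<le> (\<integral>w. (f w)^2 \<partial>M) * (\<integral>w. (g w)^2 \<partial>M)"
    by (intro mult_mono e2 e3) auto
  finally show ?thesis .
qed

lemma tpow_nonneg: "0 \<le> tpow t x"
  by (simp add: tpow_def)

lemma tpow_zero: "tpow t 0 = 0"
  by (simp add: tpow_def)

lemma tpow_mono:
  assumes "0 \<le> t" "0 \<le> x" "x \<le> y" shows "tpow t x \<le> tpow t y"
  using assms by (auto simp: tpow_def intro: powr_mono2)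

lemma tpow_mult:
  assumes "0 \<le> x" "0 \<le> y" shows "tpow t (x * y) = tpow t x * tpow t y"
  using assms by (auto simp: tpow_def powr_mult)

lemma le_powr_small:
  fixes z t :: real
  assumes "0 \<le> z" "z \<le> 1" "t \<le> 1"
  shows "z \<le> z powr t"
proof -
  have "z powr 1 \<le> z powr t" using assms by (intro powr_mono') auto
  then show ?thesis using assms by (cases "z = 0") auto
qed

lemma powr_subadd:
  fixes x y t :: real
  assumes "0 \<le> x" "0 \<le> y" "0 < t" "t \<le> 1"
  shows "(x + y) powr t \<le> x powr t + y powr t"
proof (cases "x + y = 0")
  case True then show ?thesis using assms by simp
next
  case False
  then have s: "0 < x + y" using assms by simp
  have a: "x / (x+y) \<le> (x/(x+y)) powr t"
    using assms s by (intro le_powr_small) (auto simp: divide_simps)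
  have b: "y / (x+y) \<le> (y/(x+y)) powr t"
    using assms s by (intro le_powr_small) (auto simp: divide_simps)
  have "1 = x/(x+y) + y/(x+y)" using s by (simp add: add_divide_distrib[symmetric])
  also have "\<dots> \<le> (x/(x+y)) powr t + (y/(x+y)) powr t" using a b by simp
  also have "\<dots> = (x powr t + y powr t) / (x+y) powr t"
    using assms s by (simp add: powr_divide add_divide_distrib)
  finally show ?thesis using s by (simp add: divide_simps)
qed

lemma tpow_add:
  assumes "0 \<le> t" "t \<le> 1" "0 \<le> x" "0 \<le> y" shows "tpow t (x + y) \<le> tpow t x + tpow t y"
  using assms powr_subadd[of x y t] by (auto simp: tpow_def)

lemma tpow_sum:
  assumes "0 \<le> t" "t \<le> 1" "\<And>s. s \<in> S \<Longrightarrow> 0 \<le> f s"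
  shows "tpow t (\<Sum>s\<in>S. f s) \<le> (\<Sum>s\<in>S. tpow t (f s))"
  using assms(3)
proof (induction S rule: infinite_finite_induct)
  case (infinite A) then show ?case by (simp add: tpow_zero)
next
  case empty then show ?case by (simp add: tpow_zero)
next
  case (insert x F)
  have "tpow t (f x + sum f F) \<le> tpow t (f x) + tpow t (sum f F)"
    using insert assms by (intro tpow_add sum_nonneg) auto
  then show ?case using insert by simp
qed

lemma meas_slice:
  assumes "(\<lambda>(u,w). Z u w) \<in> borel_measurable (N \<Otimes>\<^sub>M M)" "u \<in> space N"
  shows "Z u \<in> borel_measurable M"
  using measurable_Pair2[OF assms] by simp

lemma field_L2:
  fixes Z :: "real \<Rightarrow> 'w \<Rightarrow> real" and a b :: real
  assumes P: "prob_space M"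
    and meas: "(\<lambda>(u,w). Z u w) \<in> borel_measurable (lborel \<Otimes>\<^sub>M M)"
    and pathL2: "\<forall>w\<in>space M. set_integrable lborel {a..b} (\<lambda>u. (Z u w)^2)"
    and intI: "integrable M (\<lambda>w. LINT u:{a..b}|lborel. (Z u w)^2)"
  shows "AE u in lborel. u \<in> {a..b} \<longrightarrow> L2 M (Z u)"
    and "set_integrable lborel {a..b} (\<lambda>u. \<integral>w. (Z u w)^2 \<partial>M)"
    and "(LINT u:{a..b}|lborel. \<integral>w. (Z u w)^2 \<partial>M) = (\<integral>w. (LINT u:{a..b}|lborel. (Z u w)^2) \<partial>M)"
proof -
  interpret prob_space M by fact
  interpret pair_sigma_finite lborel M by unfold_locales
  define F where "F = (\<lambda>(u,w). indicator {a..b} u * (Z u w)^2)"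
  have Fm[measurable]: "F \<in> borel_measurable (lborel \<Otimes>\<^sub>M M)"
    unfolding F_def using meas by measurable
  have Fnn: "\<And>x. 0 \<le> F x" unfolding F_def by (auto split: prod.splits)
  have "(\<integral>\<^sup>+ x. ennreal (norm (F x)) \<partial>(lborel \<Otimes>\<^sub>M M)) = (\<integral>\<^sup>+ w. (\<integral>\<^sup>+ u. ennreal (norm (F (u,w))) \<partial>lborel) \<partial>M)"
    by (rule nn_integral_snd[symmetric]) measurable
  also have "\<dots> = (\<integral>\<^sup>+ w. ennreal (LINT u:{a..b}|lborel. (Z u w)^2) \<partial>M)"
  proof (rule nn_integral_cong)
    fix w assume w: "w \<in> space M"
    have "(\<integral>\<^sup>+ u. ennreal (norm (F (u,w))) \<partial>lborel) = (\<integral>\<^sup>+ u. ennreal (indicator {a..b} u * (Z u w)^2) \<partial>lborel)"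
      using Fnn by (intro nn_integral_cong) (simp add: F_def)
    also have "\<dots> = ennreal (\<integral>u. indicator {a..b} u * (Z u w)^2 \<partial>lborel)"
      using pathL2 w by (intro nn_integral_eq_integral) (auto simp: set_integrable_def)
    finally show "(\<integral>\<^sup>+ u. ennreal (norm (F (u,w))) \<partial>lborel) = ennreal (LINT u:{a..b}|lborel. (Z u w)^2)"
      by (simp add: set_lebesgue_integral_def)
  qed
  also have "\<dots> = ennreal (\<integral>w. (LINT u:{a..b}|lborel. (Z u w)^2) \<partial>M)"
    using intI by (intro nn_integral_eq_integral) (auto simp: set_lebesgue_integral_def intro!: integral_nonneg_AE)
  also have "\<dots> < \<infinity>" by simp
  finally have Fint: "integrable (lborel \<Otimes>\<^sub>M M) F"
    using Fm by (intro integrableI_bounded) auto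
  then have Fint': "integrable (lborel \<Otimes>\<^sub>M M) (\<lambda>(u,w). indicator {a..b} u * (Z u w)^2)"
    by (simp add: F_def)
  show "AE u in lborel. u \<in> {a..b} \<longrightarrow> L2 M (Z u)"
    using AE_integrable_fst[OF Fint']
  proof eventually_elim
    case (elim u)
    show ?case
    proof
      assume "u \<in> {a..b}"
      then show "L2 M (Z u)" using elim meas_slice[OF meas] by (simp add: L2_def)
    qed
  qed
  show "set_integrable lborel {a..b} (\<lambda>u. \<integral>w. (Z u w)^2 \<partial>M)"
    using integrable_fst[OF Fint'] by (simp add: set_integrable_def)
  show "(LINT u:{a..b}|lborel. \<integral>w. (Z u w)^2 \<partial>M) = (\<integral>w. (LINT u:{a..b}|lborel. (Z u w)^2) \<partial>M)"
    using Fubini_integral[OF Fint'] by (simp add: set_lebesgue_integral_def)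
qed

definition HSgood :: "real \<Rightarrow> real \<Rightarrow> (real \<Rightarrow> real \<Rightarrow> real) \<Rightarrow> bool" where
  "HSgood a b K \<longleftrightarrow> (AE u in lborel. u \<in> {a..b} \<longrightarrow> set_integrable lborel {a..b} (\<lambda>v. (K u v)^2))
     \<and> set_integrable lborel {a..b} (\<lambda>u. LINT v:{a..b}|lborel. (K u v)^2)"

lemma set_int_mono_AE:
  fixes f g :: "real \<Rightarrow> real"
  assumes "set_integrable lborel S g" "AE x in lborel. x \<in> S \<longrightarrow> f x \<le> g x"
    "AE x in lborel. x \<in> S \<longrightarrow> 0 \<le> g x"
  shows "(LINT x:S|lborel. f x) \<le> (LINT x:S|lborel. g x)"
  unfolding set_lebesgue_integral_def
proof (rule integral_mono_AE')
  show "integrable lborel (\<lambda>x. indicator S x *\<^sub>R g x)" using assms(1) by (simp add: set_integrable_def)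
  show "AE x in lborel. indicator S x *\<^sub>R f x \<le> indicator S x *\<^sub>R g x"
    using assms(2) by eventually_elim (auto simp: indicator_def)
  show "AE x in lborel. 0 \<le> indicator S x *\<^sub>R g x"
    using assms(3) by eventually_elim (auto simp: indicator_def)
qed

lemma set_int_sq_nonneg: "0 \<le> (LINT x:S|lborel. ((f::real\<Rightarrow>real) x)^2)"
  unfolding set_lebesgue_integral_def by (intro integral_nonneg_AE) (auto simp: indicator_def)

lemma HS_dom:
  fixes K :: "real \<Rightarrow> real \<Rightarrow> real" and g d :: "real \<Rightarrow> real"
  assumes Km[measurable]: "(\<lambda>(u,v). K u v) \<in> borel_measurable (lborel \<Otimes>\<^sub>M lborel)"
    and dom: "AE u in lborel. u \<in> {a..b} \<longrightarrow> (AE v in lborel. v \<in> {a..b} \<longrightarrow> (K u v)^2 \<le> g u * d v)"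
    and gi: "set_integrable lborel {a..b} g" and gn: "\<And>u. 0 \<le> g u"
    and di: "set_integrable lborel {a..b} d" and dn: "\<And>v. 0 \<le> d v"
  shows "HSgood a b K" and "HSnorm a b K \<le> sqrt ((LINT u:{a..b}|lborel. g u) * (LINT v:{a..b}|lborel. d v))"
proof -
  define D where "D = (LINT v:{a..b}|lborel. d v)"
  have inner: "set_integrable lborel {a..b} (\<lambda>v. (K u v)^2) \<and> (LINT v:{a..b}|lborel. (K u v)^2) \<le> g u * D"
    if u: "u \<in> {a..b}" "AE v in lborel. v \<in> {a..b} \<longrightarrow> (K u v)^2 \<le> g u * d v" for u
  proof
    have "integrable lborel (\<lambda>v. indicator {a..b} v *\<^sub>R (g u * d v))"
      using di unfolding set_integrable_def by (simp add: mult.left_commute)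
    moreover have "(\<lambda>v. indicator {a..b} v *\<^sub>R (K u v)^2) \<in> borel_measurable lborel"
      using measurable_Pair2[OF Km, of u] by simp
    moreover have "AE v in lborel. norm (indicator {a..b} v *\<^sub>R (K u v)^2) \<le> norm (indicator {a..b} v *\<^sub>R (g u * d v))"
      using u(2) by eventually_elim (auto simp: indicator_def gn dn)
    ultimately show si: "set_integrable lborel {a..b} (\<lambda>v. (K u v)^2)"
      unfolding set_integrable_def by (rule Bochner_Integration.integrable_bound)
    have "(LINT v:{a..b}|lborel. (K u v)^2) \<le> (LINT v:{a..b}|lborel. g u * d v)"
      using u(2) di by (intro set_int_mono_AE) (auto simp: gn dn set_integrable_def mult.left_commute)
    also have "\<dots> = g u * D" unfolding D_def set_lebesgue_integral_def
      by (simp add: mult.left_commute)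
    finally show "(LINT v:{a..b}|lborel. (K u v)^2) \<le> g u * D" .
  qed
  have AEin: "AE u in lborel. u \<in> {a..b} \<longrightarrow> set_integrable lborel {a..b} (\<lambda>v. (K u v)^2) \<and> (LINT v:{a..b}|lborel. (K u v)^2) \<le> g u * D"
    using dom
  proof eventually_elim
    case (elim u)
    show ?case
    proof
      assume "u \<in> {a..b}"
      with elim have "AE v in lborel. v \<in> {a..b} \<longrightarrow> (K u v)^2 \<le> g u * d v" by blast
      with inner[OF \<open>u \<in> {a..b}\<close>] show "set_integrable lborel {a..b} (\<lambda>v. (K u v)^2) \<and> (LINT v:{a..b}|lborel. (K u v)^2) \<le> g u * D" .
    qed
  qed
  have Im: "(\<lambda>u. LINT v:{a..b}|lborel. (K u v)^2) \<in> borel_measurable lborel"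
    unfolding set_lebesgue_integral_def by measurable
  have gD: "set_integrable lborel {a..b} (\<lambda>u. g u * D)"
  proof -
    have "integrable lborel (\<lambda>x. (indicator {a..b} x * g x) * D)"
      using gi by (intro integrable_mult_left) (simp add: set_integrable_def)
    then show ?thesis unfolding set_integrable_def by (simp add: mult.assoc)
  qed
  have Iint: "set_integrable lborel {a..b} (\<lambda>u. LINT v:{a..b}|lborel. (K u v)^2)"
    unfolding set_integrable_def
  proof (rule Bochner_Integration.integrable_bound)
    show "integrable lborel (\<lambda>u. indicator {a..b} u *\<^sub>R (g u * D))" using gD by (simp add: set_integrable_def)
    show "(\<lambda>u. indicator {a..b} u *\<^sub>R (LINT v:{a..b}|lborel. (K u v)^2)) \<in> borel_measurable lborel"
      using Im by measurable
    have D0: "0 \<le> D" unfolding D_def set_lebesgue_integral_def by (intro integral_nonneg_AE) (auto simp: dn)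
    show "AE u in lborel. norm (indicator {a..b} u *\<^sub>R (LINT v:{a..b}|lborel. (K u v)^2)) \<le> norm (indicator {a..b} u *\<^sub>R (g u * D))"
      using AEin by eventually_elim (use D0 in \<open>auto simp: indicator_def gn set_int_sq_nonneg\<close>)
  qed
  show "HSgood a b K" unfolding HSgood_def using AEin Iint by auto
  have "(LINT u:{a..b}|lborel. LINT v:{a..b}|lborel. (K u v)^2) \<le> (LINT u:{a..b}|lborel. g u * D)"
    using AEin gD by (intro set_int_mono_AE) (auto simp: gn set_int_sq_nonneg D_def intro!: mult_nonneg_nonneg
       integral_nonneg_AE simp: set_lebesgue_integral_def dn)
  also have "\<dots> = (LINT u:{a..b}|lborel. g u) * D" unfolding set_lebesgue_integral_def
    by (simp only: real_scaleR_def mult.assoc[symmetric] integral_mult_left_zero)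
  finally show "HSnorm a b K \<le> sqrt ((LINT u:{a..b}|lborel. g u) * (LINT v:{a..b}|lborel. d v))"
    unfolding HSnorm_def D_def by simp
qed

lemma set_integrable_sum':
  fixes f :: "'i \<Rightarrow> 'a \<Rightarrow> real"
  assumes "\<And>s. s \<in> S \<Longrightarrow> set_integrable M A (f s)"
  shows "set_integrable M A (\<lambda>x. \<Sum>s\<in>S. f s x)"
  using assms unfolding set_integrable_def real_scaleR_def sum_distrib_left by (intro Bochner_Integration.integrable_sum) auto

lemma set_integral_sum':
  fixes f :: "'i \<Rightarrow> 'a \<Rightarrow> real"
  assumes "\<And>s. s \<in> S \<Longrightarrow> set_integrable M A (f s)"
  shows "(LINT x:A|M. (\<Sum>s\<in>S. f s x)) = (\<Sum>s\<in>S. (LINT x:A|M. f s x))"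
  using assms unfolding set_integrable_def set_lebesgue_integral_def real_scaleR_def sum_distrib_left
  by (intro Bochner_Integration.integral_sum) auto

lemma set_int_nonneg:
  fixes f :: "'a \<Rightarrow> real"
  shows "(\<And>x. 0 \<le> f x) \<Longrightarrow> 0 \<le> (LINT x:S|M. f x)"
  unfolding set_lebesgue_integral_def by (intro integral_nonneg_AE) (auto simp: indicator_def)

lemma HS_inner_nonneg: "0 \<le> (LINT u:{a..b}|lborel. LINT v:{a..b}|lborel. ((K::real\<Rightarrow>real\<Rightarrow>real) u v)^2)"
  by (intro set_int_nonneg set_int_sq_nonneg)

lemma HSnorm_nonneg: "0 \<le> HSnorm a b K"
  by (simp add: HSnorm_def HS_inner_nonneg)

lemma sum_sq_card:
  fixes y :: "'i \<Rightarrow> real"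
  shows "(\<Sum>s\<in>S. y s)^2 \<le> real (card S) * (\<Sum>s\<in>S. (y s)^2)"
  using Cauchy_Schwarz_ineq_sum[of "\<lambda>s. y s" "\<lambda>_. 1" S] by (simp add: mult.commute)

lemma HS_sum:
  fixes K :: "real \<Rightarrow> real \<Rightarrow> real" and Ks :: "'i \<Rightarrow> real \<Rightarrow> real \<Rightarrow> real"
  assumes fin: "finite S" and good: "\<And>s. s \<in> S \<Longrightarrow> HSgood a b (Ks s)"
    and eq: "AE u in lborel. u \<in> {a..b} \<longrightarrow> (AE v in lborel. v \<in> {a..b} \<longrightarrow> K u v = (\<Sum>s\<in>S. Ks s u v))"
  shows "HSnorm a b K \<le> sqrt (real (card S)) * (\<Sum>s\<in>S. HSnorm a b (Ks s))"
proof -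
  define n where "n = real (card S)"
  define I where "I = (\<lambda>s u. LINT v:{a..b}|lborel. (Ks s u v)^2)"
  have AEall: "AE u in lborel. \<forall>s\<in>S. u \<in> {a..b} \<longrightarrow> set_integrable lborel {a..b} (\<lambda>v. (Ks s u v)^2)"
    using good fin by (intro eventually_ball_finite) (auto simp: HSgood_def)
  have inner: "AE u in lborel. u \<in> {a..b} \<longrightarrow> (LINT v:{a..b}|lborel. (K u v)^2) \<le> n * (\<Sum>s\<in>S. I s u)"
    using AEall eq
  proof eventually_elim
    case (elim u)
    show ?case
    proof
      assume u: "u \<in> {a..b}"
      have si: "\<And>s. s \<in> S \<Longrightarrow> set_integrable lborel {a..b} (\<lambda>v. (Ks s u v)^2)" using elim u by auto
      have "(LINT v:{a..b}|lborel. (K u v)^2) \<le> (LINT v:{a..b}|lborel. n * (\<Sum>s\<in>S. (Ks s u v)^2))"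
      proof (rule set_int_mono_AE)
        show "set_integrable lborel {a..b} (\<lambda>v. n * (\<Sum>s\<in>S. (Ks s u v)^2))"
          using si by (intro set_integrable_mult_right set_integrable_sum') auto
        show "AE v in lborel. v \<in> {a..b} \<longrightarrow> (K u v)^2 \<le> n * (\<Sum>s\<in>S. (Ks s u v)^2)"
        proof -
          have AEv: "AE v in lborel. v \<in> {a..b} \<longrightarrow> K u v = (\<Sum>s\<in>S. Ks s u v)" using elim u by blast
          then show ?thesis by eventually_elim (auto simp: n_def sum_sq_card)
        qed
        show "AE v in lborel. v \<in> {a..b} \<longrightarrow> 0 \<le> n * (\<Sum>s\<in>S. (Ks s u v)^2)"
          by (intro AE_I2 impI mult_nonneg_nonneg sum_nonneg) (auto simp: n_def)
      qed
      also have "\<dots> = n * (\<Sum>s\<in>S. I s u)"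
        using si by (simp add: set_integral_sum' I_def)
      finally show "(LINT v:{a..b}|lborel. (K u v)^2) \<le> n * (\<Sum>s\<in>S. I s u)" .
    qed
  qed
  have Ii: "\<And>s. s \<in> S \<Longrightarrow> set_integrable lborel {a..b} (I s)"
    using good by (auto simp: HSgood_def I_def)
  have "(LINT u:{a..b}|lborel. LINT v:{a..b}|lborel. (K u v)^2) \<le> (LINT u:{a..b}|lborel. n * (\<Sum>s\<in>S. I s u))"
  proof (rule set_int_mono_AE)
    show "set_integrable lborel {a..b} (\<lambda>u. n * (\<Sum>s\<in>S. I s u))"
      using Ii by (intro set_integrable_mult_right set_integrable_sum') auto
    show "AE u in lborel. u \<in> {a..b} \<longrightarrow> (LINT v:{a..b}|lborel. (K u v)^2) \<le> n * (\<Sum>s\<in>S. I s u)"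
      by (rule inner)
    show "AE u in lborel. u \<in> {a..b} \<longrightarrow> 0 \<le> n * (\<Sum>s\<in>S. I s u)"
      by (intro AE_I2 impI mult_nonneg_nonneg sum_nonneg) (auto simp: n_def I_def set_int_sq_nonneg)
  qed
  also have "\<dots> = n * (\<Sum>s\<in>S. (LINT u:{a..b}|lborel. I s u))"
    using Ii by (simp add: set_integral_sum')
  also have "\<dots> = n * (\<Sum>s\<in>S. (HSnorm a b (Ks s))^2)"
  proof -
    have "\<And>s. (LINT u:{a..b}|lborel. I s u) = (HSnorm a b (Ks s))^2"
      unfolding HSnorm_def I_def
      by (subst real_sqrt_pow2) (auto intro!: set_int_nonneg set_int_sq_nonneg)
    then show ?thesis by simp
  qed
  also have "\<dots> \<le> n * (\<Sum>s\<in>S. HSnorm a b (Ks s))^2"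
  proof -
    have "(\<Sum>s\<in>S. (HSnorm a b (Ks s))^2) \<le> (\<Sum>s\<in>S. HSnorm a b (Ks s))^2"
    proof -
      have "(\<Sum>s\<in>S. (HSnorm a b (Ks s))^2) = (\<Sum>s\<in>S. HSnorm a b (Ks s) * HSnorm a b (Ks s))"
        by (simp add: power2_eq_square)
      also have "\<dots> \<le> (\<Sum>s\<in>S. HSnorm a b (Ks s) * (\<Sum>t\<in>S. HSnorm a b (Ks t)))"
        using fin by (intro sum_mono mult_left_mono member_le_sum) (auto simp: HSnorm_nonneg)
      also have "\<dots> = (\<Sum>s\<in>S. HSnorm a b (Ks s))^2"
        by (simp add: power2_eq_square sum_distrib_right)
      finally show ?thesis .
    qed
    then show ?thesis by (intro mult_left_mono) (auto simp: n_def)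
  qed
  finally have "(HSnorm a b K)^2 \<le> (sqrt n * (\<Sum>s\<in>S. HSnorm a b (Ks s)))^2"
    by (simp add: HSnorm_def set_int_sq_nonneg power_mult_distrib n_def set_lebesgue_integral_def integral_nonneg_AE)
  then have "HSnorm a b K \<le> sqrt n * (\<Sum>s\<in>S. HSnorm a b (Ks s))"
    by (rule power2_le_imp_le) (auto simp: n_def HSnorm_nonneg intro!: sum_nonneg mult_nonneg_nonneg)
  then show ?thesis by (simp add: n_def)
qed

lemma HS_scale:
  assumes "HSgood a b K"
  shows "HSgood a b (\<lambda>u v. c * K u v)" "HSnorm a b (\<lambda>u v. c * K u v) = \<bar>c\<bar> * HSnorm a b K"
proof -
  have e: "\<And>u. (LINT v:{a..b}|lborel. (c * K u v)^2) = c^2 * (LINT v:{a..b}|lborel. (K u v)^2)"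
    by (simp add: power_mult_distrib)
  have "AE u in lborel. u \<in> {a..b} \<longrightarrow> set_integrable lborel {a..b} (\<lambda>v. (K u v)^2)"
    using assms by (simp add: HSgood_def)
  then have "AE u in lborel. u \<in> {a..b} \<longrightarrow> set_integrable lborel {a..b} (\<lambda>v. (c * K u v)^2)"
    by eventually_elim (auto simp: power_mult_distrib)
  moreover have "set_integrable lborel {a..b} (\<lambda>u. c^2 * (LINT v:{a..b}|lborel. (K u v)^2))"
    using assms by (simp add: HSgood_def)
  ultimately show "HSgood a b (\<lambda>u v. c * K u v)" unfolding HSgood_def e by simp
  show "HSnorm a b (\<lambda>u v. c * K u v) = \<bar>c\<bar> * HSnorm a b K"
    unfolding HSnorm_def e by (simp add: real_sqrt_mult)
qed

lemma covar_kernel_meas: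
  assumes sf: "sigma_finite_measure M"
    and Fm: "(\<lambda>(u,w). F u w) \<in> borel_measurable (lborel \<Otimes>\<^sub>M M)"
    and Gm: "(\<lambda>(v,w). G v w) \<in> borel_measurable (lborel \<Otimes>\<^sub>M M)"
  shows "(\<lambda>(u,v). covar M (F u) (G v)) \<in> borel_measurable (lborel \<Otimes>\<^sub>M lborel)"
proof -
  interpret sigma_finite_measure M by fact
  have F1: "(\<lambda>p. (\<lambda>(u,w). F u w) (fst (fst p), snd p)) \<in> borel_measurable ((lborel \<Otimes>\<^sub>M lborel) \<Otimes>\<^sub>M M)"
    by (rule measurable_compose[OF _ Fm]) measurable
  have G1: "(\<lambda>p. (\<lambda>(v,w). G v w) (snd (fst p), snd p)) \<in> borel_measurable ((lborel \<Otimes>\<^sub>M lborel) \<Otimes>\<^sub>M M)"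
    by (rule measurable_compose[OF _ Gm]) measurable
  have "(\<lambda>(x,w). F (fst x) w * G (snd x) w) \<in> borel_measurable ((lborel \<Otimes>\<^sub>M lborel) \<Otimes>\<^sub>M M)"
    using borel_measurable_times[OF F1 G1] by (simp add: case_prod_beta')
  then have I1: "(\<lambda>x. \<integral>w. F (fst x) w * G (snd x) w \<partial>M) \<in> borel_measurable (lborel \<Otimes>\<^sub>M lborel)"
    by (rule borel_measurable_lebesgue_integral[where f="\<lambda>x w. F (fst x) w * G (snd x) w"])
  have F2: "(\<lambda>x. \<integral>w. F x w \<partial>M) \<in> borel_measurable lborel"
    using Fm by (intro borel_measurable_lebesgue_integral) simp
  have G2: "(\<lambda>x. \<integral>w. G x w \<partial>M) \<in> borel_measurable lborel"
    using Gm by (intro borel_measurable_lebesgue_integral) simp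
  have "(\<lambda>x. (\<integral>w. F (fst x) w * G (snd x) w \<partial>M) - (\<integral>w. F (fst x) w \<partial>M) * (\<integral>w. G (snd x) w \<partial>M))
      \<in> borel_measurable (lborel \<Otimes>\<^sub>M lborel)"
    using I1 F2 G2 by measurable
  then show ?thesis unfolding covar_def by (simp add: case_prod_beta')
qed

lemma sum_UNIV_plus:
  fixes h :: "('a::finite + 'b::finite) \<Rightarrow> real"
  shows "(\<Sum>s\<in>UNIV. h s) = (\<Sum>x\<in>UNIV. h (Inl x)) + (\<Sum>y\<in>UNIV. h (Inr y))"
proof -
  have "(\<Sum>s\<in>UNIV. h s) = (\<Sum>s\<in>UNIV <+> UNIV. h s)" by simp
  also have "\<dots> = (\<Sum>x\<in>UNIV. h (Inl x)) + (\<Sum>y\<in>UNIV. h (Inr y))"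
    by (subst sum.Plus) auto
  finally show ?thesis .
qed

lemma sum_UNIV_pair:
  fixes h :: "('a::finite \<times> 'b::finite) \<Rightarrow> real"
  shows "(\<Sum>s\<in>UNIV. h s) = (\<Sum>x\<in>UNIV. \<Sum>y\<in>UNIV. h (x,y))"
  by (simp add: sum.cartesian_product UNIV_Times_UNIV[symmetric] del: UNIV_Times_UNIV)

lemma covar_expand:
  fixes f g :: "'r::finite \<Rightarrow> 'w \<Rightarrow> real"
  assumes fm: "finite_measure M"
    and f: "\<And>l. L2 M (f l)" and e1: "L2 M e1" and g: "\<And>m. L2 M (g m)" and e2: "L2 M e2"
    and z1: "\<And>m. covar M e1 (g m) = 0" and z2: "covar M e1 e2 = 0"
  shows "covar M (\<lambda>w. (\<Sum>l\<in>UNIV. a l * f l w) + e1 w) (\<lambda>w. (\<Sum>m\<in>UNIV. b m * g m w) + e2 w)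
     = (\<Sum>l\<in>UNIV. \<Sum>m\<in>UNIV. a l * b m * covar M (f l) (g m)) + (\<Sum>l\<in>UNIV. a l * covar M (f l) e2)"
proof -
  define Y where "Y = (\<lambda>w. (\<Sum>m\<in>UNIV. b m * g m w) + e2 w)"
  have af: "\<And>l. L2 M (\<lambda>w. a l * f l w)" using f by (intro L2_cmult)
  have bg: "\<And>m. L2 M (\<lambda>w. b m * g m w)" using g by (intro L2_cmult)
  have Sf: "L2 M (\<lambda>w. \<Sum>l\<in>UNIV. a l * f l w)" using af by (intro L2_sum)
  have Sg: "L2 M (\<lambda>w. \<Sum>m\<in>UNIV. b m * g m w)" using bg by (intro L2_sum)
  have Y: "L2 M Y" unfolding Y_def using Sg e2 by (intro L2_add)
  have s1: "covar M (\<lambda>w. (\<Sum>l\<in>UNIV. a l * f l w) + e1 w) Y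
      = covar M (\<lambda>w. \<Sum>l\<in>UNIV. a l * f l w) Y + covar M e1 Y"
    by (rule covar_add_left[OF fm Sf e1 Y])
  have s2: "covar M (\<lambda>w. \<Sum>l\<in>UNIV. a l * f l w) Y = (\<Sum>l\<in>UNIV. a l * covar M (f l) Y)"
    using covar_sum_left[OF fm af Y] by (simp add: covar_cmult_left)
  have s3: "covar M (f l) Y = (\<Sum>m\<in>UNIV. b m * covar M (f l) (g m)) + covar M (f l) e2" for l
  proof -
    have "covar M (f l) Y = covar M Y (f l)" by (rule covar_sym)
    also have "\<dots> = covar M (\<lambda>w. \<Sum>m\<in>UNIV. b m * g m w) (f l) + covar M e2 (f l)"
      unfolding Y_def by (rule covar_add_left[OF fm Sg e2 f])
    also have "covar M (\<lambda>w. \<Sum>m\<in>UNIV. b m * g m w) (f l) = (\<Sum>m\<in>UNIV. covar M (\<lambda>w. b m * g m w) (f l))"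
      by (rule covar_sum_left[OF fm bg f])
    finally show ?thesis
      by (simp add: covar_cmult_left covar_sym[of M _ "f l"])
  qed
  have s4: "covar M e1 Y = 0"
  proof -
    have "covar M e1 Y = covar M Y e1" by (rule covar_sym)
    also have "\<dots> = covar M (\<lambda>w. \<Sum>m\<in>UNIV. b m * g m w) e1 + covar M e2 e1"
      unfolding Y_def by (rule covar_add_left[OF fm Sg e2 e1])
    also have "covar M (\<lambda>w. \<Sum>m\<in>UNIV. b m * g m w) e1 = (\<Sum>m\<in>UNIV. covar M (\<lambda>w. b m * g m w) e1)"
      by (rule covar_sum_left[OF fm bg e1])
    finally show ?thesis using z1 z2 by (simp add: covar_cmult_left covar_sym[of M _ e1])
  qed
  show ?thesis unfolding Y_def[symmetric] s1 s2 s3 s4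
    by (simp add: distrib_left sum.distrib sum_distrib_left mult.assoc)
qed

lemma pair_kernel:
  fixes F G :: "real \<Rightarrow> 'w \<Rightarrow> real"
  assumes P: "prob_space M"
    and Fm: "(\<lambda>(u,w). F u w) \<in> borel_measurable (lborel \<Otimes>\<^sub>M M)"
    and Gm: "(\<lambda>(v,w). G v w) \<in> borel_measurable (lborel \<Otimes>\<^sub>M M)"
    and FL: "AE u in lborel. u \<in> {a..b} \<longrightarrow> L2 M (F u)"
    and GL: "AE v in lborel. v \<in> {a..b} \<longrightarrow> L2 M (G v)"
    and Fi: "set_integrable lborel {a..b} (\<lambda>u. \<integral>w. (F u w)^2 \<partial>M)"
    and Gi: "set_integrable lborel {a..b} (\<lambda>v. \<integral>w. (G v w)^2 \<partial>M)"
    and FB: "(LINT u:{a..b}|lborel. \<integral>w. (F u w)^2 \<partial>M) \<le> B1"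
    and GB: "(LINT v:{a..b}|lborel. \<integral>w. (G v w)^2 \<partial>M) \<le> B2"
  shows "HSgood a b (\<lambda>u v. covar M (F u) (G v))"
    and "HSnorm a b (\<lambda>u v. covar M (F u) (G v)) \<le> sqrt (B1 * B2)"
proof -
  interpret prob_space M by fact
  have sf: "sigma_finite_measure M" by unfold_locales
  have Km: "(\<lambda>(u,v). covar M (F u) (G v)) \<in> borel_measurable (lborel \<Otimes>\<^sub>M lborel)"
    by (rule covar_kernel_meas[OF sf Fm Gm])
  have dom: "AE u in lborel. u \<in> {a..b} \<longrightarrow> (AE v in lborel. v \<in> {a..b} \<longrightarrow>
      (covar M (F u) (G v))^2 \<le> (\<integral>w. (F u w)^2 \<partial>M) * (\<integral>w. (G v w)^2 \<partial>M))"
    using FL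
  proof eventually_elim
    case (elim u)
    show ?case
    proof
      assume u: "u \<in> {a..b}"
      show "AE v in lborel. v \<in> {a..b} \<longrightarrow> (covar M (F u) (G v))^2 \<le> (\<integral>w. (F u w)^2 \<partial>M) * (\<integral>w. (G v w)^2 \<partial>M)"
        using GL by eventually_elim (use elim u P in \<open>auto intro: covar_CS\<close>)
    qed
  qed
  have nn: "\<And>u. 0 \<le> (\<integral>w. (F u w)^2 \<partial>M)" "\<And>v. 0 \<le> (\<integral>w. (G v w)^2 \<partial>M)" by simp_all
  note H = HS_dom[OF Km dom Fi nn(1) Gi nn(2)]
  show "HSgood a b (\<lambda>u v. covar M (F u) (G v))" by (rule H(1))
  have "(LINT u:{a..b}|lborel. \<integral>w. (F u w)^2 \<partial>M) * (LINT v:{a..b}|lborel. \<integral>w. (G v w)^2 \<partial>M) \<le> B1 * B2"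
    using FB GB by (intro mult_mono) (auto intro!: set_int_nonneg order.trans[OF _ FB])
  then show "HSnorm a b (\<lambda>u v. covar M (F u) (G v)) \<le> sqrt (B1 * B2)"
    using H(2) real_sqrt_le_mono order.trans by blast
qed

lemma X_field:
  fixes Z :: "real \<Rightarrow> 'w \<Rightarrow> real"
  assumes P: "prob_space M"
    and meas: "(\<lambda>(u,w). Z u w) \<in> borel_measurable (lborel \<Otimes>\<^sub>M M)"
    and pathL2: "\<forall>w\<in>space M. set_integrable lborel {a..b} (\<lambda>u. (Z u w)^2)"
    and i4: "integrable M (\<lambda>w. (L2norm a b (\<lambda>u. Z u w))^4)"
    and b4: "(\<integral>w. (L2norm a b (\<lambda>u. Z u w))^4 \<partial>M) \<le> CX"
  shows "AE u in lborel. u \<in> {a..b} \<longrightarrow> L2 M (Z u)"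
    and "set_integrable lborel {a..b} (\<lambda>u. \<integral>w. (Z u w)^2 \<partial>M)"
    and "(LINT u:{a..b}|lborel. \<integral>w. (Z u w)^2 \<partial>M) \<le> 1 + CX"
proof -
  interpret prob_space M by fact
  define I where "I = (\<lambda>w. LINT u:{a..b}|lborel. (Z u w)^2)"
  have I0: "\<And>w. 0 \<le> I w" unfolding I_def by (rule set_int_sq_nonneg)
  have e4: "\<And>w. (L2norm a b (\<lambda>u. Z u w))^4 = (I w)^2"
  proof -
    fix w
    have "(L2norm a b (\<lambda>u. Z u w))^4 = ((sqrt (I w))^2)^2" unfolding L2norm_def I_def
      by (simp add: power_mult[symmetric])
    then show "(L2norm a b (\<lambda>u. Z u w))^4 = (I w)^2" using I0 by simp
  qed
  have Im: "I \<in> borel_measurable M"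
  proof -
    have "(\<lambda>w. sqrt ((L2norm a b (\<lambda>u. Z u w))^4)) \<in> borel_measurable M"
      using borel_measurable_integrable[OF i4] by measurable
    moreover have "\<And>w. sqrt ((L2norm a b (\<lambda>u. Z u w))^4) = I w" using e4 I0 by simp
    ultimately show ?thesis by simp
  qed
  have i1: "integrable M (\<lambda>w. 1 + (I w)^2)" using i4 e4 by simp
  have Ii: "integrable M I"
  proof (rule Bochner_Integration.integrable_bound[OF i1 Im])
    have "\<And>w. \<bar>I w * 1\<bar> \<le> (I w)^2 + 1^2" by (rule abs_mult_le_sq)
    then show "AE w in M. norm (I w) \<le> norm (1 + (I w)^2)" by (simp add: add.commute)
  qed
  note FL = field_L2[OF P meas pathL2 Ii[unfolded I_def]]
  show "AE u in lborel. u \<in> {a..b} \<longrightarrow> L2 M (Z u)" by (rule FL(1))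
  show "set_integrable lborel {a..b} (\<lambda>u. \<integral>w. (Z u w)^2 \<partial>M)" by (rule FL(2))
  have "(\<integral>w. I w \<partial>M) \<le> (\<integral>w. 1 + (I w)^2 \<partial>M)"
  proof (rule integral_mono[OF Ii i1])
    fix w
    have "\<bar>I w * 1\<bar> \<le> (I w)^2 + 1^2" by (rule abs_mult_le_sq)
    then show "I w \<le> 1 + (I w)^2" by simp
  qed
  also have "\<dots> = 1 + (\<integral>w. (I w)^2 \<partial>M)" using i1 i4 e4 by (simp add: prob_space)
  also have "\<dots> \<le> 1 + CX" using b4 e4 by simp
  finally show "(LINT u:{a..b}|lborel. \<integral>w. (Z u w)^2 \<partial>M) \<le> 1 + CX"
    using FL(3) by (simp add: I_def)
qed

lemma e_field:
  fixes Z :: "real \<Rightarrow> 'w \<Rightarrow> real"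
  assumes P: "prob_space M"
    and meas: "(\<lambda>(u,w). Z u w) \<in> borel_measurable (lborel \<Otimes>\<^sub>M M)"
    and pathL2: "\<forall>w\<in>space M. set_integrable lborel {a..b} (\<lambda>u. (Z u w)^2)"
    and i2: "integrable M (\<lambda>w. (L2norm a b (\<lambda>u. Z u w))^2)"
    and b2: "(\<integral>w. (L2norm a b (\<lambda>u. Z u w))^2 \<partial>M) \<le> Ce"
  shows "AE u in lborel. u \<in> {a..b} \<longrightarrow> L2 M (Z u)"
    and "set_integrable lborel {a..b} (\<lambda>u. \<integral>w. (Z u w)^2 \<partial>M)"
    and "(LINT u:{a..b}|lborel. \<integral>w. (Z u w)^2 \<partial>M) \<le> Ce"
proof -
  have e2: "\<And>w. (L2norm a b (\<lambda>u. Z u w))^2 = (LINT u:{a..b}|lborel. (Z u w)^2)"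
    unfolding L2norm_def using set_int_sq_nonneg by simp
  have Ii: "integrable M (\<lambda>w. LINT u:{a..b}|lborel. (Z u w)^2)" using i2 e2 by simp
  note FL = field_L2[OF P meas pathL2 Ii]
  show "AE u in lborel. u \<in> {a..b} \<longrightarrow> L2 M (Z u)" by (rule FL(1))
  show "set_integrable lborel {a..b} (\<lambda>u. \<integral>w. (Z u w)^2 \<partial>M)" by (rule FL(2))
  show "(LINT u:{a..b}|lborel. \<integral>w. (Z u w)^2 \<partial>M) \<le> Ce"
    using FL(3) b2 e2 by simp
qed

lemma key:
  fixes M :: "'w measure" and A :: "nat \<Rightarrow> 'r::finite \<Rightarrow> real"
    and X :: "int \<Rightarrow> 'r \<Rightarrow> real \<Rightarrow> 'w \<Rightarrow> real" and e :: "int \<Rightarrow> nat \<Rightarrow> real \<Rightarrow> 'w \<Rightarrow> real"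
  assumes P: "prob_space M"
    and Xm: "\<forall>t l. (\<lambda>(u,w). X t l u w) \<in> borel_measurable (lborel \<Otimes>\<^sub>M M)"
    and em: "\<forall>t j. j < p \<longrightarrow> (\<lambda>(u,w). e t j u w) \<in> borel_measurable (lborel \<Otimes>\<^sub>M M)"
    and XL2: "\<forall>t l. \<forall>w\<in>space M. set_integrable lborel {a..b} (\<lambda>u. (X t l u w)^2)"
    and eL2: "\<forall>t j. j < p \<longrightarrow> (\<forall>w\<in>space M. set_integrable lborel {a..b} (\<lambda>u. (e t j u w)^2))"
    and X4: "\<forall>t l. integrable M (\<lambda>w. (L2norm a b (\<lambda>u. X t l u w))^4) \<and>
        (\<integral>w. (L2norm a b (\<lambda>u. X t l u w))^4 \<partial>M) \<le> CX"
    and e2: "\<forall>t j. j < p \<longrightarrow> integrable M (\<lambda>w. (L2norm a b (\<lambda>u. e t j u w))^2) \<and>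
        (\<integral>w. (L2norm a b (\<lambda>u. e t j u w))^2 \<partial>M) \<le> Ce"
    and C4b: "\<forall>t s l j u v. 0 \<le> s \<longrightarrow> j < p \<longrightarrow> covar M (X t l u) (e (t + s) j v) = 0"
    and white: "\<forall>t s j j' u v. j < p \<longrightarrow> j' < p \<longrightarrow> s \<noteq> 0 \<longrightarrow> covar M (e (t + s) j u) (e t j' v) = 0"
    and k: "1 \<le> k" and i: "i < p" and j: "j < p"
  shows "HSnorm a b (Sigma_yy M A X e k i j) \<le> sqrt (real (card (UNIV :: ('r \<times> 'r + 'r) set))) *
      ((\<Sum>l\<in>UNIV. \<Sum>m\<in>UNIV. \<bar>A i l\<bar> * \<bar>A j m\<bar> * sqrt ((1 + CX) * (1 + CX))) +
       (\<Sum>l\<in>UNIV. \<bar>A i l\<bar> * HSnorm a b (\<lambda>u v. covar M (X (int k) l u) (e 0 j v))))"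
    and "HSnorm a b (\<lambda>u v. covar M (X (int k) l u) (e 0 j v)) \<le> sqrt ((1 + CX) * Ce)"
proof -
  interpret prob_space M by fact
  have fm: "finite_measure M" by unfold_locales
  have XL2': "\<And>t l. \<forall>w\<in>space M. set_integrable lborel {a..b} (\<lambda>u. (X t l u w)^2)" using XL2 by blast
  have eL2': "\<And>t j. j < p \<Longrightarrow> \<forall>w\<in>space M. set_integrable lborel {a..b} (\<lambda>u. (e t j u w)^2)" using eL2 by blast
  note XF = X_field[OF P Xm[rule_format] XL2' conjunct1[OF X4[rule_format]] conjunct2[OF X4[rule_format]]]
  have EF: "(AE u in lborel. u \<in> {a..b} \<longrightarrow> L2 M (e t jj u))
    \<and> set_integrable lborel {a..b} (\<lambda>u. \<integral>w. (e t jj u w)^2 \<partial>M)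
    \<and> (LINT u:{a..b}|lborel. \<integral>w. (e t jj u w)^2 \<partial>M) \<le> Ce" if jj: "jj < p" for t jj
  proof -
    have m: "(\<lambda>(u,w). e t jj u w) \<in> borel_measurable (lborel \<Otimes>\<^sub>M M)" using em jj by blast
    have pl: "\<forall>w\<in>space M. set_integrable lborel {a..b} (\<lambda>u. (e t jj u w)^2)" using eL2' jj by blast
    have i2: "integrable M (\<lambda>w. (L2norm a b (\<lambda>u. e t jj u w))^2)" using e2 jj by blast
    have b2: "(\<integral>w. (L2norm a b (\<lambda>u. e t jj u w))^2 \<partial>M) \<le> Ce" using e2 jj by blast
    show ?thesis using e_field[OF P m pl i2 b2] by blast
  qed
  define Kxx where "Kxx = (\<lambda>l m u v. covar M (X (int k) l u) (X 0 m v))"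
  define V where "V = (\<lambda>l u v. covar M (X (int k) l u) (e 0 j v))"
  have Kxx: "HSgood a b (Kxx l m) \<and> HSnorm a b (Kxx l m) \<le> sqrt ((1 + CX) * (1 + CX))" for l m
    unfolding Kxx_def using pair_kernel[OF P Xm[rule_format] Xm[rule_format] XF(1) XF(1) XF(2) XF(2) XF(3) XF(3)]
    by blast
  have Vg: "HSgood a b (V l) \<and> HSnorm a b (V l) \<le> sqrt ((1 + CX) * Ce)" for l
    unfolding V_def using pair_kernel[OF P Xm[rule_format] em[rule_format, OF j] XF(1) EF[OF j, THEN conjunct1] XF(2) EF[OF j, THEN conjunct2, THEN conjunct1] XF(3) EF[OF j, THEN conjunct2, THEN conjunct2]]
    by blast
  then show "HSnorm a b (\<lambda>u v. covar M (X (int k) l u) (e 0 j v)) \<le> sqrt ((1 + CX) * Ce)"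
    unfolding V_def by blast
  define Ks where "Ks = case_sum (\<lambda>lm u v. (A i (fst lm) * A j (snd lm)) * Kxx (fst lm) (snd lm) u v)
      (\<lambda>l u v. A i l * V l u v)"
  have gU: "AE u in lborel. u \<in> {a..b} \<longrightarrow> (\<forall>l. L2 M (X (int k) l u)) \<and> L2 M (e (int k) i u)"
  proof -
    have "AE u in lborel. \<forall>l. u \<in> {a..b} \<longrightarrow> L2 M (X (int k) l u)"
      using XF(1) by (intro eventually_all_finite) auto
    then show ?thesis using EF[OF i, of "int k", THEN conjunct1] by eventually_elim auto
  qed
  have gV: "AE v in lborel. v \<in> {a..b} \<longrightarrow> (\<forall>m. L2 M (X 0 m v)) \<and> L2 M (e 0 j v)"
  proof -
    have "AE v in lborel. \<forall>m. v \<in> {a..b} \<longrightarrow> L2 M (X 0 m v)"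
      using XF(1) by (intro eventually_all_finite) auto
    then show ?thesis using EF[OF j, of 0, THEN conjunct1] by eventually_elim auto
  qed
  have Yk: "\<And>t i u. Ymodel A X e t i u = (\<lambda>w. (\<Sum>l\<in>UNIV. A i l * X t l u w) + e t i u w)"
    by (rule ext) (simp add: Ymodel_def)
  have pw: "Sigma_yy M A X e k i j u v = (\<Sum>s\<in>UNIV. Ks s u v)"
    if u: "(\<forall>l. L2 M (X (int k) l u)) \<and> L2 M (e (int k) i u)"
    and v: "(\<forall>m. L2 M (X 0 m v)) \<and> L2 M (e 0 j v)" for u v
  proof -
    have z1: "covar M (e (int k) i u) (X 0 m v) = 0" for m
    proof -
      have "covar M (X 0 m v) (e (0 + int k) i u) = 0" by (rule C4b[rule_format]) (use i in auto)
      then show ?thesis by (simp add: covar_sym)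
    qed
    have z2: "covar M (e (int k) i u) (e 0 j v) = 0"
    proof -
      have "covar M (e (0 + int k) i u) (e 0 j v) = 0" by (rule white[rule_format]) (use i j k in auto)
      then show ?thesis by simp
    qed
    have "Sigma_yy M A X e k i j u v =
        (\<Sum>l\<in>UNIV. \<Sum>m\<in>UNIV. A i l * A j m * covar M (X (int k) l u) (X 0 m v)) +
        (\<Sum>l\<in>UNIV. A i l * covar M (X (int k) l u) (e 0 j v))"
      unfolding Sigma_yy_def Yk
      using covar_expand[OF fm, of "\<lambda>l. X (int k) l u" "e (int k) i u" "\<lambda>m. X 0 m v" "e 0 j v" "A i" "A j"]
        u v z1 z2 by simp
    also have "\<dots> = (\<Sum>s\<in>UNIV. Ks s u v)"
      by (simp add: sum_UNIV_plus sum_UNIV_pair Ks_def Kxx_def V_def)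
    finally show ?thesis .
  qed
  have eq: "AE u in lborel. u \<in> {a..b} \<longrightarrow> (AE v in lborel. v \<in> {a..b} \<longrightarrow> Sigma_yy M A X e k i j u v = (\<Sum>s\<in>UNIV. Ks s u v))"
    using gU
  proof eventually_elim
    case (elim u)
    show ?case
    proof
      assume "u \<in> {a..b}"
      with elim have u: "(\<forall>l. L2 M (X (int k) l u)) \<and> L2 M (e (int k) i u)" by blast
      show "AE v in lborel. v \<in> {a..b} \<longrightarrow> Sigma_yy M A X e k i j u v = (\<Sum>s\<in>UNIV. Ks s u v)"
        using gV by eventually_elim (use u pw in blast)
    qed
  qed
  have good: "HSgood a b (Ks s)" for s
    by (cases s) (auto simp: Ks_def intro!: HS_scale(1) Kxx[THEN conjunct1] Vg[THEN conjunct1])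
  have "HSnorm a b (Sigma_yy M A X e k i j) \<le> sqrt (real (card (UNIV :: ('r \<times> 'r + 'r) set))) * (\<Sum>s\<in>UNIV. HSnorm a b (Ks s))"
    by (rule HS_sum[OF _ good eq]) simp
  also have "(\<Sum>s\<in>UNIV. HSnorm a b (Ks s)) =
      (\<Sum>l\<in>UNIV. \<Sum>m\<in>UNIV. \<bar>A i l\<bar> * \<bar>A j m\<bar> * HSnorm a b (Kxx l m)) + (\<Sum>l\<in>UNIV. \<bar>A i l\<bar> * HSnorm a b (V l))"
    by (simp add: sum_UNIV_plus sum_UNIV_pair Ks_def HS_scale(2) Kxx[THEN conjunct1] Vg[THEN conjunct1] abs_mult)
  also have "\<dots> \<le> (\<Sum>l\<in>UNIV. \<Sum>m\<in>UNIV. \<bar>A i l\<bar> * \<bar>A j m\<bar> * sqrt ((1 + CX) * (1 + CX))) +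
       (\<Sum>l\<in>UNIV. \<bar>A i l\<bar> * HSnorm a b (V l))"
    using Kxx by (intro add_right_mono sum_mono mult_left_mono) auto
  finally show "HSnorm a b (Sigma_yy M A X e k i j) \<le> sqrt (real (card (UNIV :: ('r \<times> 'r + 'r) set))) *
      ((\<Sum>l\<in>UNIV. \<Sum>m\<in>UNIV. \<bar>A i l\<bar> * \<bar>A j m\<bar> * sqrt ((1 + CX) * (1 + CX))) +
       (\<Sum>l\<in>UNIV. \<bar>A i l\<bar> * HSnorm a b (\<lambda>u v. covar M (X (int k) l u) (e 0 j v))))"
    unfolding V_def by (simp add: mult_left_mono)
qed

theorem lemma1:
  fixes a b :: real
    and M :: "nat \<Rightarrow> 'w measure"
    and A :: "nat \<Rightarrow> nat \<Rightarrow> 'r::finite \<Rightarrow> real"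
    and X :: "nat \<Rightarrow> int \<Rightarrow> 'r \<Rightarrow> real \<Rightarrow> 'w \<Rightarrow> real"
    and e :: "nat \<Rightarrow> int \<Rightarrow> nat \<Rightarrow> real \<Rightarrow> 'w \<Rightarrow> real"
    and k0 :: nat and \<tau> L :: real and c1 c2 :: "nat \<Rightarrow> real"
  assumes ab: "a < b"
    and k0: "1 \<le> k0"
    and prob: "\<forall>p\<ge>CARD('r). prob_space (M p)"
    \<comment> \<open>random functions in L2(U): jointly measurable, square-integrable paths\<close>
    and X_meas: "\<forall>p\<ge>CARD('r). \<forall>t l. (\<lambda>(u,w). X p t l u w) \<in> borel_measurable (lborel \<Otimes>\<^sub>M M p)"
    and e_meas: "\<forall>p\<ge>CARD('r). \<forall>t j. j < p \<longrightarrow> (\<lambda>(u,w). e p t j u w) \<in> borel_measurable (lborel \<Otimes>\<^sub>M M p)"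
    and X_L2: "\<forall>p\<ge>CARD('r). \<forall>t l. \<forall>w\<in>space (M p). set_integrable lborel {a..b} (\<lambda>u. (X p t l u w)^2)"
    and e_L2: "\<forall>p\<ge>CARD('r). \<forall>t j. j < p \<longrightarrow> (\<forall>w\<in>space (M p). set_integrable lborel {a..b} (\<lambda>u. (e p t j u w)^2))"
    \<comment> \<open>A has rank r (its r columns are linearly independent)\<close>
    and A_rank: "\<forall>p\<ge>CARD('r). \<forall>c::'r \<Rightarrow> real. (\<forall>i<p. (\<Sum>l\<in>UNIV. A p i l * c l) = 0) \<longrightarrow> (\<forall>l. c l = 0)"
    \<comment> \<open>(C1)\<close>
    and X_stat_mean: "\<forall>p\<ge>CARD('r). \<forall>t l u. (\<integral>w. X p t l u w \<partial>M p) = (\<integral>w. X p 0 l u w \<partial>M p)"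
    and X_stat_cov: "\<forall>p\<ge>CARD('r). \<forall>t s l m u v.
        covar (M p) (X p (t + s) l u) (X p t m v) = covar (M p) (X p s l u) (X p 0 m v)"
    and X_mom4: "\<exists>CX. \<forall>p\<ge>CARD('r). \<forall>t l.
        integrable (M p) (\<lambda>w. (L2norm a b (\<lambda>u. X p t l u w))^4) \<and>
        (\<integral>w. (L2norm a b (\<lambda>u. X p t l u w))^4 \<partial>M p) \<le> CX"
    and X_rank: "\<forall>p\<ge>CARD('r). \<exists>k\<in>{1..k0}.
        rank (\<chi> l m. \<Sum>q\<in>UNIV. LINT u:{a..b}|lborel. LINT v:{a..b}|lborel.
           covar (M p) (X p (int k) l u) (X p 0 q v) * covar (M p) (X p (int k) m u) (X p 0 q v)
           :: real^'r^'r) = CARD('r)"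
    \<comment> \<open>(C2)\<close>
    and e_mean: "\<forall>p\<ge>CARD('r). \<forall>t j u. j < p \<longrightarrow> (\<integral>w. e p t j u w \<partial>M p) = 0"
    and e_white: "\<forall>p\<ge>CARD('r). \<forall>t s j j' u v. j < p \<longrightarrow> j' < p \<longrightarrow> s \<noteq> 0 \<longrightarrow>
        covar (M p) (e p (t + s) j u) (e p t j' v) = 0"
    and e_stat: "\<forall>p\<ge>CARD('r). \<forall>t j j' u v. j < p \<longrightarrow> j' < p \<longrightarrow>
        covar (M p) (e p t j u) (e p t j' v) = covar (M p) (e p 0 j u) (e p 0 j' v)"
    and e_mom2: "\<exists>Ce. \<forall>p\<ge>CARD('r). \<forall>t j. j < p \<longrightarrow>
        integrable (M p) (\<lambda>w. (L2norm a b (\<lambda>u. e p t j u w))^2) \<and>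
        (\<integral>w. (L2norm a b (\<lambda>u. e p t j u w))^2 \<partial>M p) \<le> Ce"
    and e_eig: "\<exists>c>0. \<forall>p\<ge>CARD('r). \<forall>v\<in>{a..b}. \<forall>mu.
        is_eigenvalue p (\<lambda>i j. covar (M p) (e p 0 i v) (e p 0 j v)) mu \<longrightarrow> c \<le> mu"
    \<comment> \<open>cross-covariance of X and eps does not depend on t\<close>
    and Xe_stat: "\<forall>p\<ge>CARD('r). \<forall>t s l j u v. j < p \<longrightarrow>
        covar (M p) (X p (t + s) l u) (e p t j v) = covar (M p) (X p s l u) (e p 0 j v)"
    \<comment> \<open>(C4')\<close>
    and C4a: "\<forall>p\<ge>CARD('r). \<forall>k\<in>{1..k0}. \<forall>l.
        (\<Sum>j<p. tpow \<tau> (HSnorm a b (\<lambda>u v. covar (M p) (X p (int k) l u) (e p 0 j v)))) \<le> c2 p"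
    and C4b: "\<forall>p\<ge>CARD('r). \<forall>t s l j u v. 0 \<le> s \<longrightarrow> j < p \<longrightarrow>
        covar (M p) (X p t l u) (e p (t + s) j v) = 0"
    \<comment> \<open>(C6)\<close>
    and tau: "0 \<le> \<tau>" "\<tau> < 1"
    and C6a: "\<forall>p\<ge>CARD('r). \<forall>l. (\<Sum>i<p. tpow \<tau> \<bar>A p i l\<bar>) \<le> c1 p"
    and C6b: "\<forall>p\<ge>CARD('r). \<forall>i<p. \<forall>l. \<bar>A p i l\<bar> \<le> L"
  shows "\<exists>C. \<forall>p\<ge>CARD('r). \<forall>k\<in>{1..k0}.
     (\<forall>j<p. (\<Sum>i<p. tpow \<tau> (HSnorm a b (Sigma_yy (M p) (A p) (X p) (e p) k i j))) \<le> C * c1 p) \<and>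
     (\<forall>i<p. (\<Sum>j<p. tpow \<tau> (HSnorm a b (Sigma_yy (M p) (A p) (X p) (e p) k i j))) \<le> C * (c1 p + c2 p))"
proof -
  from X_mom4 obtain CX where CX: "\<forall>p\<ge>CARD('r). \<forall>t l.
        integrable (M p) (\<lambda>w. (L2norm a b (\<lambda>u. X p t l u w))^4) \<and>
        (\<integral>w. (L2norm a b (\<lambda>u. X p t l u w))^4 \<partial>M p) \<le> CX" by blast
  from e_mom2 obtain Ce where Ce: "\<forall>p\<ge>CARD('r). \<forall>t j. j < p \<longrightarrow>
        integrable (M p) (\<lambda>w. (L2norm a b (\<lambda>u. e p t j u w))^2) \<and>
        (\<integral>w. (L2norm a b (\<lambda>u. e p t j u w))^2 \<partial>M p) \<le> Ce" by blast
  define n where "n = sqrt (real (card (UNIV :: ('r \<times> 'r + 'r) set)))"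
  define BX where "BX = sqrt ((1 + CX) * (1 + CX))"
  define DE where "DE = \<bar>sqrt ((1 + CX) * Ce)\<bar>"
  define r where "r = real CARD('r)"
  define Q where "Q = n * (r * L * BX + DE)"
  define T1 where "T1 = tpow \<tau> (n * r * L * BX)"
  define T2 where "T2 = tpow \<tau> (n * L)"
  define C where "C = max (tpow \<tau> Q * r) (max T1 T2 * r)"
  have t0: "0 \<le> \<tau>" and t1: "\<tau> \<le> 1" using tau by auto
  have n0: "0 \<le> n" and BX0: "0 \<le> BX" and DE0: "0 \<le> DE" and r0: "0 \<le> r"
    by (auto simp: n_def BX_def DE_def r_def)
  show ?thesis
  proof (rule exI[of _ C], intro allI impI ballI)
    fix p k assume p: "CARD('r) \<le> p" and k: "k \<in> {1..k0}"
    have p0: "0 < p" using p zero_less_card_finite[where 'a='r] by linarith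
    obtain l0 :: 'r where True by blast
    have L0: "0 \<le> L" using C6b p p0 by (meson abs_ge_zero order.trans)
    have c10: "0 \<le> c1 p"
      using C6a p by (meson order.trans sum_nonneg tpow_nonneg)
    have c20: "0 \<le> c2 p"
      using C4a p k by (meson order.trans sum_nonneg tpow_nonneg)
    have k1: "1 \<le> k" using k by simp
    have Pp: "prob_space (M p)" using prob p by blast
    have Xm: "\<forall>t l. (\<lambda>(u,w). X p t l u w) \<in> borel_measurable (lborel \<Otimes>\<^sub>M M p)" using X_meas p by blast
    have em: "\<forall>t j. j < p \<longrightarrow> (\<lambda>(u,w). e p t j u w) \<in> borel_measurable (lborel \<Otimes>\<^sub>M M p)" using e_meas p by blast
    have XL: "\<forall>t l. \<forall>w\<in>space (M p). set_integrable lborel {a..b} (\<lambda>u. (X p t l u w)^2)" using X_L2 p by blast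
    have eL: "\<forall>t j. j < p \<longrightarrow> (\<forall>w\<in>space (M p). set_integrable lborel {a..b} (\<lambda>u. (e p t j u w)^2))" using e_L2 p by blast
    have X4: "\<forall>t l. integrable (M p) (\<lambda>w. (L2norm a b (\<lambda>u. X p t l u w))^4) \<and>
        (\<integral>w. (L2norm a b (\<lambda>u. X p t l u w))^4 \<partial>M p) \<le> CX" using CX p by blast
    have e2: "\<forall>t j. j < p \<longrightarrow> integrable (M p) (\<lambda>w. (L2norm a b (\<lambda>u. e p t j u w))^2) \<and>
        (\<integral>w. (L2norm a b (\<lambda>u. e p t j u w))^2 \<partial>M p) \<le> Ce" using Ce p by blast
    have c4: "\<forall>t s l j u v. 0 \<le> s \<longrightarrow> j < p \<longrightarrow> covar (M p) (X p t l u) (e p (t + s) j v) = 0"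
      using C4b p by blast
    have wh: "\<forall>t s j j' u v. j < p \<longrightarrow> j' < p \<longrightarrow> s \<noteq> 0 \<longrightarrow> covar (M p) (e p (t + s) j u) (e p t j' v) = 0"
      using e_white p by blast
    define H where "H = (\<lambda>i j. HSnorm a b (Sigma_yy (M p) (A p) (X p) (e p) k i j))"
    define V where "V = (\<lambda>l j. HSnorm a b (\<lambda>u v. covar (M p) (X p (int k) l u) (e p 0 j v)))"
    have KEY: "H i j \<le> n * ((\<Sum>l\<in>UNIV. \<Sum>m\<in>UNIV. \<bar>A p i l\<bar> * \<bar>A p j m\<bar> * BX) + (\<Sum>l\<in>UNIV. \<bar>A p i l\<bar> * V l j))"
      if i: "i < p" and j: "j < p" for i j
      using key(1)[OF Pp Xm em XL eL X4 e2 c4 wh k1 i j] unfolding H_def V_def n_def BX_def .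
    have VB: "V l j \<le> DE" if j: "j < p" for l j
      using key(2)[OF Pp Xm em XL eL X4 e2 c4 wh k1 j j] unfolding V_def DE_def by (meson abs_ge_self order.trans)
    have V0: "0 \<le> V l j" for l j unfolding V_def by (rule HSnorm_nonneg)
    have Ab: "\<And>l. \<bar>A p i l\<bar> \<le> L" if "i < p" for i using C6b p that by blast
    have H0: "0 \<le> H i j" for i j unfolding H_def by (rule HSnorm_nonneg)
    have col: "\<forall>j<p. (\<Sum>i<p. tpow \<tau> (HSnorm a b (Sigma_yy (M p) (A p) (X p) (e p) k i j))) \<le> C * c1 p"
    proof (intro allI impI)
      fix j assume j: "j < p"
      have Hi: "H i j \<le> Q * (\<Sum>l\<in>UNIV. \<bar>A p i l\<bar>)" if i: "i < p" for i
      proof -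
        have "(\<Sum>l\<in>UNIV. \<Sum>m\<in>UNIV. \<bar>A p i l\<bar> * \<bar>A p j m\<bar> * BX) \<le> (\<Sum>l\<in>UNIV. \<bar>A p i l\<bar> * (r * L * BX))"
        proof (rule sum_mono)
          fix l
          have "(\<Sum>m\<in>UNIV. \<bar>A p i l\<bar> * \<bar>A p j m\<bar> * BX) \<le> (\<Sum>m\<in>(UNIV::'r set). \<bar>A p i l\<bar> * L * BX)"
          proof (rule sum_mono)
            fix m :: 'r
            have "\<bar>A p i l\<bar> * \<bar>A p j m\<bar> \<le> \<bar>A p i l\<bar> * L" using Ab[OF j] by (simp add: mult_left_mono)
            then show "\<bar>A p i l\<bar> * \<bar>A p j m\<bar> * BX \<le> \<bar>A p i l\<bar> * L * BX" using BX0 by (rule mult_right_mono)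
          qed
          also have "\<dots> = \<bar>A p i l\<bar> * (r * L * BX)" by (simp add: r_def)
          finally show "(\<Sum>m\<in>UNIV. \<bar>A p i l\<bar> * \<bar>A p j m\<bar> * BX) \<le> \<bar>A p i l\<bar> * (r * L * BX)" .
        qed
        moreover have "(\<Sum>l\<in>UNIV. \<bar>A p i l\<bar> * V l j) \<le> (\<Sum>l\<in>UNIV. \<bar>A p i l\<bar> * DE)"
          using VB[OF j] by (intro sum_mono mult_left_mono) auto
        ultimately have "H i j \<le> n * ((\<Sum>l\<in>UNIV. \<bar>A p i l\<bar> * (r * L * BX)) + (\<Sum>l\<in>UNIV. \<bar>A p i l\<bar> * DE))"
          using KEY[OF i j] n0 by (smt (verit) mult_left_mono)
        also have "\<dots> = Q * (\<Sum>l\<in>UNIV. \<bar>A p i l\<bar>)"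
          by (simp add: Q_def sum_distrib_right[symmetric] sum.distrib[symmetric] distrib_left algebra_simps
              sum_distrib_left)
        finally show ?thesis .
      qed
      have Q0: "0 \<le> Q" using n0 r0 L0 BX0 DE0 by (simp add: Q_def)
      have "(\<Sum>i<p. tpow \<tau> (H i j)) \<le> (\<Sum>i<p. tpow \<tau> Q * (\<Sum>l\<in>UNIV. tpow \<tau> \<bar>A p i l\<bar>))"
      proof (rule sum_mono)
        fix i assume "i \<in> {..<p}"
        then have i: "i < p" by simp
        have "tpow \<tau> (H i j) \<le> tpow \<tau> (Q * (\<Sum>l\<in>UNIV. \<bar>A p i l\<bar>))"
          by (rule tpow_mono[OF t0 H0 Hi[OF i]])
        also have "\<dots> = tpow \<tau> Q * tpow \<tau> (\<Sum>l\<in>UNIV. \<bar>A p i l\<bar>)"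
          using Q0 by (intro tpow_mult) (auto intro: sum_nonneg)
        also have "\<dots> \<le> tpow \<tau> Q * (\<Sum>l\<in>UNIV. tpow \<tau> \<bar>A p i l\<bar>)"
          by (intro mult_left_mono tpow_sum t0 t1 tpow_nonneg) auto
        finally show "tpow \<tau> (H i j) \<le> tpow \<tau> Q * (\<Sum>l\<in>UNIV. tpow \<tau> \<bar>A p i l\<bar>)" .
      qed
      also have "\<dots> = tpow \<tau> Q * (\<Sum>l\<in>UNIV. \<Sum>i<p. tpow \<tau> \<bar>A p i l\<bar>)"
        by (simp add: sum_distrib_left[symmetric] sum.swap[of _ "{..<p}"])
      also have "\<dots> \<le> tpow \<tau> Q * (\<Sum>l\<in>(UNIV::'r set). c1 p)"
        using C6a p by (intro mult_left_mono sum_mono tpow_nonneg) auto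
      also have "\<dots> = (tpow \<tau> Q * r) * c1 p" by (simp add: r_def)
      also have "\<dots> \<le> C * c1 p" using c10 by (intro mult_right_mono) (auto simp: C_def)
      finally show "(\<Sum>i<p. tpow \<tau> (HSnorm a b (Sigma_yy (M p) (A p) (X p) (e p) k i j))) \<le> C * c1 p"
        unfolding H_def .
    qed
    have row: "\<forall>i<p. (\<Sum>j<p. tpow \<tau> (HSnorm a b (Sigma_yy (M p) (A p) (X p) (e p) k i j))) \<le> C * (c1 p + c2 p)"
    proof (intro allI impI)
      fix i assume i: "i < p"
      have Hj: "H i j \<le> (n * r * L * BX) * (\<Sum>m\<in>UNIV. \<bar>A p j m\<bar>) + (n * L) * (\<Sum>l\<in>UNIV. V l j)"
        if j: "j < p" for j
      proof -
        have "(\<Sum>l\<in>UNIV. \<Sum>m\<in>UNIV. \<bar>A p i l\<bar> * \<bar>A p j m\<bar> * BX) \<le> (\<Sum>l\<in>(UNIV::'r set). \<Sum>m\<in>UNIV. L * \<bar>A p j m\<bar> * BX)"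
          using Ab[OF i] BX0 by (intro sum_mono mult_right_mono) auto
        also have "\<dots> = r * L * BX * (\<Sum>m\<in>UNIV. \<bar>A p j m\<bar>)"
          by (simp add: r_def sum_distrib_left sum_distrib_right algebra_simps)
        finally have s1: "(\<Sum>l\<in>UNIV. \<Sum>m\<in>UNIV. \<bar>A p i l\<bar> * \<bar>A p j m\<bar> * BX) \<le> r * L * BX * (\<Sum>m\<in>UNIV. \<bar>A p j m\<bar>)" .
        have "(\<Sum>l\<in>UNIV. \<bar>A p i l\<bar> * V l j) \<le> (\<Sum>l\<in>UNIV. L * V l j)"
          using Ab[OF i] V0 by (intro sum_mono mult_right_mono) auto
        also have "\<dots> = L * (\<Sum>l\<in>UNIV. V l j)" by (simp add: sum_distrib_left)
        finally have s2: "(\<Sum>l\<in>UNIV. \<bar>A p i l\<bar> * V l j) \<le> L * (\<Sum>l\<in>UNIV. V l j)" .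
        have "H i j \<le> n * (r * L * BX * (\<Sum>m\<in>UNIV. \<bar>A p j m\<bar>) + L * (\<Sum>l\<in>UNIV. V l j))"
          using KEY[OF i j] s1 s2 n0 by (smt (verit) mult_left_mono)
        then show ?thesis by (simp add: algebra_simps)
      qed
      have "(\<Sum>j<p. tpow \<tau> (H i j)) \<le> (\<Sum>j<p. T1 * (\<Sum>m\<in>UNIV. tpow \<tau> \<bar>A p j m\<bar>) + T2 * (\<Sum>l\<in>UNIV. tpow \<tau> (V l j)))"
      proof (rule sum_mono)
        fix j assume "j \<in> {..<p}"
        then have j: "j < p" by simp
        have a0: "0 \<le> n * r * L * BX" using n0 r0 L0 BX0 by simp
        have b0: "0 \<le> n * L" using n0 L0 by simp
        have s0: "0 \<le> (\<Sum>m\<in>UNIV. \<bar>A p j m\<bar>)" "0 \<le> (\<Sum>l\<in>UNIV. V l j)" using V0 by (auto intro: sum_nonneg)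
        have "tpow \<tau> (H i j) \<le> tpow \<tau> ((n * r * L * BX) * (\<Sum>m\<in>UNIV. \<bar>A p j m\<bar>) + (n * L) * (\<Sum>l\<in>UNIV. V l j))"
          by (rule tpow_mono[OF t0 H0 Hj[OF j]])
        also have "\<dots> \<le> tpow \<tau> ((n * r * L * BX) * (\<Sum>m\<in>UNIV. \<bar>A p j m\<bar>)) + tpow \<tau> ((n * L) * (\<Sum>l\<in>UNIV. V l j))"
          using a0 b0 s0 by (intro tpow_add t0 t1 mult_nonneg_nonneg a0 b0 s0)
        also have "\<dots> = T1 * tpow \<tau> (\<Sum>m\<in>UNIV. \<bar>A p j m\<bar>) + T2 * tpow \<tau> (\<Sum>l\<in>UNIV. V l j)"
          using a0 b0 s0 by (simp add: tpow_mult T1_def T2_def)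
        also have "\<dots> \<le> T1 * (\<Sum>m\<in>UNIV. tpow \<tau> \<bar>A p j m\<bar>) + T2 * (\<Sum>l\<in>UNIV. tpow \<tau> (V l j))"
          using V0 by (intro add_mono mult_left_mono tpow_sum t0 t1) (auto simp: T1_def T2_def tpow_nonneg)
        finally show "tpow \<tau> (H i j) \<le> T1 * (\<Sum>m\<in>UNIV. tpow \<tau> \<bar>A p j m\<bar>) + T2 * (\<Sum>l\<in>UNIV. tpow \<tau> (V l j))" .
      qed
      also have "\<dots> = T1 * (\<Sum>m\<in>UNIV. \<Sum>j<p. tpow \<tau> \<bar>A p j m\<bar>) + T2 * (\<Sum>l\<in>UNIV. \<Sum>j<p. tpow \<tau> (V l j))"
        by (simp add: sum.distrib sum_distrib_left[symmetric] sum.swap[of _ "{..<p}"])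
      also have "\<dots> \<le> T1 * (\<Sum>m\<in>(UNIV::'r set). c1 p) + T2 * (\<Sum>l\<in>(UNIV::'r set). c2 p)"
      proof (intro add_mono mult_left_mono sum_mono)
        fix m :: 'r show "(\<Sum>j<p. tpow \<tau> \<bar>A p j m\<bar>) \<le> c1 p" using C6a p by blast
      next
        fix l :: 'r show "(\<Sum>j<p. tpow \<tau> (V l j)) \<le> c2 p" using C4a p k unfolding V_def by blast
      qed (auto simp: T1_def T2_def tpow_nonneg)
      also have "\<dots> = (T1 * r) * c1 p + (T2 * r) * c2 p" by (simp add: r_def)
      also have "\<dots> \<le> C * c1 p + C * c2 p"
      proof -
        have m1: "T1 * r \<le> C" unfolding C_def using r0
          by (meson max.cobounded1 max.coboundedI2 mult_right_mono order.trans)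
        have m2: "T2 * r \<le> C" unfolding C_def using r0
          by (meson max.cobounded2 max.coboundedI2 mult_right_mono order.trans)
        show ?thesis by (intro add_mono mult_right_mono m1 m2 c10 c20)
      qed
      also have "\<dots> = C * (c1 p + c2 p)" by (simp add: distrib_left)
      finally show "(\<Sum>j<p. tpow \<tau> (HSnorm a b (Sigma_yy (M p) (A p) (X p) (e p) k i j))) \<le> C * (c1 p + c2 p)"
        unfolding H_def .
    qed
    show "(\<forall>j<p. (\<Sum>i<p. tpow \<tau> (HSnorm a b (Sigma_yy (M p) (A p) (X p) (e p) k i j))) \<le> C * c1 p) \<and>
      (\<forall>i<p. (\<Sum>j<p. tpow \<tau> (HSnorm a b (Sigma_yy (M p) (A p) (X p) (e p) k i j))) \<le> C * (c1 p + c2 p))"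
      using col row by blast
  qed
qed

end
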